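(* Finite memory strategies are sufficient in non-singleton interval discounted sum games: if $I$ is a real interval containing more than one point, $\lambda\in(0,1)$, and Eve has a strategy ensuring that every consistent play $\pi$ of the game graph $G$ satisfies $DS_\lambda(\pi)\in I$, then she has such a strategy with finite memory.
   Context: A game graph is a tuple $G=(V,V_\exists,E,w,q_0)$ where $(V,E)$ is a finite directed graph in which every vertex has an outgoing edge, $w:E\to\mathbb{Z}$ is an integer edge-weight function, $V_\exists\subseteq V$ are Eve's vertices (the rest are Adam's), and $q_0\in V$ the initial vertex. A play is an infinite path $\pi=v_0v_1\cdots$ with $v_0=q_0$. A strategy for a player maps finite play prefixes ending in one of that player's vertices to a successor vertex; it has finite memory if it can be realized as the output of a finite-state machine reading the play. The discounted sum is $DS_\lambda(\pi)=\sum_{i\ge0}\lambda^i w(v_i,v_{i+1})$. *)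

theory Defs
  imports "HOL-Analysis.Analysis"
begin

text \<open>The weight function is w :: 'v => 'v => int (only its values on
edges matter).\<close>

definition game_graph :: "'v set \<Rightarrow> 'v set \<Rightarrow> ('v \<times> 'v) set \<Rightarrow> 'v \<Rightarrow> bool" where
  "game_graph V VE E q0 \<longleftrightarrow>
     finite V \<and> E \<subseteq> V \<times> V \<and> VE \<subseteq> V \<and> q0 \<in> V \<and>
     (\<forall>v\<in>V. \<exists>u. (v, u) \<in> E)"

definition is_play :: "('v \<times> 'v) set \<Rightarrow> 'v \<Rightarrow> (nat \<Rightarrow> 'v) \<Rightarrow> bool" where
  "is_play E q0 p \<longleftrightarrow> p 0 = q0 \<and> (\<forall>i. (p i, p (Suc i)) \<in> E)"

definition is_prefix :: "('v \<times> 'v) set \<Rightarrow> 'v \<Rightarrow> 'v list \<Rightarrow> bool" where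
  "is_prefix E q0 h \<longleftrightarrow> h \<noteq> [] \<and> hd h = q0 \<and>
     (\<forall>i. Suc i < length h \<longrightarrow> (h ! i, h ! Suc i) \<in> E)"

definition eve_strategy :: "'v set \<Rightarrow> ('v \<times> 'v) set \<Rightarrow> 'v \<Rightarrow> ('v list \<Rightarrow> 'v) \<Rightarrow> bool" where
  "eve_strategy VE E q0 \<sigma> \<longleftrightarrow>
     (\<forall>h. is_prefix E q0 h \<and> last h \<in> VE \<longrightarrow> (last h, \<sigma> h) \<in> E)"

definition play_prefix :: "(nat \<Rightarrow> 'v) \<Rightarrow> nat \<Rightarrow> 'v list" where
  "play_prefix p i = map p [0..<Suc i]"

definition consistent :: "'v set \<Rightarrow> ('v \<times> 'v) set \<Rightarrow> 'v \<Rightarrow> ('v list \<Rightarrow> 'v) \<Rightarrow> (nat \<Rightarrow> 'v) \<Rightarrow> bool" where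
  "consistent VE E q0 \<sigma> p \<longleftrightarrow> is_play E q0 p \<and>
     (\<forall>i. p i \<in> VE \<longrightarrow> p (Suc i) = \<sigma> (play_prefix p i))"

text \<open>Memory states are encoded as natural numbers,
which is no loss of generality for finite memory.\<close>
definition finite_memory :: "'v set \<Rightarrow> ('v \<times> 'v) set \<Rightarrow> 'v \<Rightarrow> ('v list \<Rightarrow> 'v) \<Rightarrow> bool" where
  "finite_memory VE E q0 \<sigma> \<longleftrightarrow>
     (\<exists>(M :: nat set) m0 upd out. finite M \<and> m0 \<in> M \<and> (\<forall>m\<in>M. \<forall>v. upd m v \<in> M) \<and>
        (\<forall>h. is_prefix E q0 h \<and> last h \<in> VE \<longrightarrow> \<sigma> h = out (foldl upd m0 h)))"

definition disc_sum :: "real \<Rightarrow> ('v \<Rightarrow> 'v \<Rightarrow> int) \<Rightarrow> (nat \<Rightarrow> 'v) \<Rightarrow> real" where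
  "disc_sum lam w p = (\<Sum>i. lam ^ i * real_of_int (w (p i) (p (Suc i))))"

end

theory Submission
  imports Defs
begin


definition path :: "('v \<times> 'v) set \<Rightarrow> (nat \<Rightarrow> 'v) \<Rightarrow> bool" where
  "path E p \<longleftrightarrow> (\<forall>i. (p i, p (Suc i)) \<in> E)"

lemma path_tail: "path E p \<Longrightarrow> path E (\<lambda>j. p (j + K))"
  by (simp add: path_def)


locale dg =
  fixes V :: "'v set" and VE :: "'v set" and E :: "('v \<times> 'v) set" and w :: "'v \<Rightarrow> 'v \<Rightarrow> int" and lam :: real
  assumes finV: "finite V" and EV: "E \<subseteq> V \<times> V" and succ: "\<forall>v\<in>V. \<exists>u. (v,u) \<in> E"
    and lam0: "0 < lam" and lam1: "lam < 1"
begin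

definition B0 :: real where "B0 = (\<Sum>e\<in>E. \<bar>real_of_int (w (fst e) (snd e))\<bar>)"
definition C :: real where "C = B0 / (1 - lam)"

lemma finE: "finite E" using finV EV finite_SigmaI finite_subset by blast

lemma w_bound: "(u,v) \<in> E \<Longrightarrow> \<bar>real_of_int (w u v)\<bar> \<le> B0"
  unfolding B0_def using member_le_sum[OF _ _ finE, of "(u,v)" "\<lambda>e. \<bar>real_of_int (w (fst e) (snd e))\<bar>"]
  by auto

lemma B0_nonneg: "0 \<le> B0" unfolding B0_def by (simp add: sum_nonneg)

lemma C_nonneg: "0 \<le> C" unfolding C_def using B0_nonneg lam1 by simp

lemma C_eq: "B0 + lam * C = C"
  unfolding C_def using lam1 by (simp add: field_simps)

lemma path_V: "path E p \<Longrightarrow> p i \<in> V"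
  unfolding path_def using EV by blast

lemma geo: "(\<lambda>i. lam ^ i * B0) sums C"
proof -
  have "(\<lambda>i. lam ^ i) sums (1 / (1 - lam))" using geometric_sums[of lam] lam0 lam1 by simp
  from sums_mult2[OF this, of B0] show ?thesis unfolding C_def by simp
qed

lemma term_bound: "path E p \<Longrightarrow> \<bar>lam ^ i * real_of_int (w (p i) (p (Suc i)))\<bar> \<le> lam ^ i * B0"
  using w_bound[of "p i" "p (Suc i)"] lam0 unfolding path_def
  by (simp add: abs_mult mult_left_mono)

lemma ds_summable: "path E p \<Longrightarrow> summable (\<lambda>i. lam ^ i * real_of_int (w (p i) (p (Suc i))))"
  apply (rule summable_comparison_test'[where g="\<lambda>i. lam ^ i * B0" and N=0])
  using geo sums_summable term_bound by (auto simp: real_norm_def)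

lemma ds_bound: assumes "path E p" shows "\<bar>disc_sum lam w p\<bar> \<le> C"
proof -
  have s: "summable (\<lambda>i. lam ^ i * B0)" using geo sums_summable by blast
  have "disc_sum lam w p \<le> (\<Sum>i. lam ^ i * B0)"
    unfolding disc_sum_def
    apply (rule suminf_le) using term_bound[OF assms] ds_summable[OF assms] s abs_le_D1 by auto
  moreover have "- (\<Sum>i. lam ^ i * B0) \<le> disc_sum lam w p"
    unfolding disc_sum_def suminf_minus[OF s, symmetric]
    apply (rule suminf_le) using term_bound[OF assms] ds_summable[OF assms] s abs_le_D2
    by (auto simp: summable_minus_iff) (smt (verit))
  ultimately show ?thesis using sums_unique[OF geo] by auto
qed

lemma ds_split: assumes "path E p"
  shows "disc_sum lam w p = (\<Sum>i<K. lam ^ i * real_of_int (w (p i) (p (Suc i))))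
            + lam ^ K * disc_sum lam w (\<lambda>j. p (j + K))"
proof -
  have "disc_sum lam w p = (\<Sum>n. lam ^ (n + K) * real_of_int (w (p (n + K)) (p (Suc (n + K)))))
     + (\<Sum>i<K. lam ^ i * real_of_int (w (p i) (p (Suc i))))"
    unfolding disc_sum_def using suminf_split_initial_segment[OF ds_summable[OF assms], of K] by simp
  also have "(\<Sum>n. lam ^ (n + K) * real_of_int (w (p (n + K)) (p (Suc (n + K)))))
      = lam ^ K * disc_sum lam w (\<lambda>j. p (j + K))"
    unfolding disc_sum_def
    using suminf_mult[OF ds_summable[OF path_tail[OF assms], of K], of "lam ^ K"]
    by (simp add: power_add mult_ac)
  finally show ?thesis by simp
qed

lemma disc_sum_neg: "path E p \<Longrightarrow> disc_sum lam (\<lambda>u v. - w u v) p = - disc_sum lam w p"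
  unfolding disc_sum_def using suminf_minus[OF ds_summable] by simp

lemma telescope:
  assumes p: "path E p" and fb: "\<forall>v\<in>V. \<bar>f v\<bar> \<le> D"
    and st: "\<forall>i. f (p i) \<le> real_of_int (w (p i) (p (Suc i))) + lam * f (p (Suc i))"
  shows "f (p 0) \<le> disc_sum lam w p"
proof -
  let ?a = "\<lambda>i. lam ^ i * real_of_int (w (p i) (p (Suc i)))"
  have ind: "f (p 0) \<le> sum ?a {..<n} + lam ^ n * f (p n)" for n
  proof (induction n)
    case 0 then show ?case by simp
  next
    case (Suc n)
    have "lam ^ n * f (p n) \<le> lam ^ n * (real_of_int (w (p n) (p (Suc n))) + lam * f (p (Suc n)))"
      using st lam0 by (simp add: mult_left_mono)
    then show ?case using Suc by (simp add: algebra_simps)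
  qed
  have t1: "(\<lambda>n. sum ?a {..<n}) \<longlonglongrightarrow> disc_sum lam w p"
    unfolding disc_sum_def using summable_LIMSEQ[OF ds_summable[OF p]] .
  have "(\<lambda>n. lam ^ n * D) \<longlonglongrightarrow> 0 * D"
    by (intro tendsto_mult LIMSEQ_power_zero) (use lam0 lam1 in auto)
  then have g0: "(\<lambda>n. lam ^ n * D) \<longlonglongrightarrow> 0" by simp
  have "\<forall>\<^sub>F n in sequentially. norm (lam ^ n * f (p n)) \<le> lam ^ n * D"
    using fb path_V[OF p] lam0 by (auto simp: abs_mult mult_left_mono)
  from Lim_null_comparison[OF this g0] have t2: "(\<lambda>n. lam ^ n * f (p n)) \<longlonglongrightarrow> 0" .
  have "(\<lambda>n. sum ?a {..<n} + lam ^ n * f (p n)) \<longlonglongrightarrow> disc_sum lam w p + 0"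
    by (intro tendsto_add t1 t2)
  then show ?thesis using ind by (intro LIMSEQ_le_const) auto
qed

end


context dg begin

definition succs :: "'v \<Rightarrow> 'v set" where "succs v = {u. (v,u) \<in> E}"

lemma succs_fin: "finite (succs v)"
proof -
  have "succs v \<subseteq> snd ` E" unfolding succs_def by force
  then show ?thesis using finE finite_subset by blast
qed

lemma succs_ne: "v \<in> V \<Longrightarrow> succs v \<noteq> {}" using succ unfolding succs_def by auto

lemma succs_V: "u \<in> succs v \<Longrightarrow> u \<in> V" using EV unfolding succs_def by auto

definition T :: "('v \<Rightarrow> ereal) \<Rightarrow> 'v \<Rightarrow> ereal" where
  "T f v = (if v \<in> V then max (- ereal C)
      (if v \<in> VE then Max ((\<lambda>u. ereal (real_of_int (w v u)) + ereal lam * f u) ` succs v)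
       else Min ((\<lambda>u. ereal (real_of_int (w v u)) + ereal lam * f u) ` succs v)) else 0)"

lemma Max_pw: "finite S \<Longrightarrow> S \<noteq> {} \<Longrightarrow> (\<And>u. u \<in> S \<Longrightarrow> f u \<le> g u) \<Longrightarrow> Max (f ` S) \<le> Max (g ` (S::'v set))"
  for f g :: "'v \<Rightarrow> ereal"
  by (subst Max_le_iff) (auto intro: order_trans[OF _ Max_ge])

lemma Min_pw: "finite S \<Longrightarrow> S \<noteq> {} \<Longrightarrow> (\<And>u. u \<in> S \<Longrightarrow> f u \<le> g u) \<Longrightarrow> Min (f ` S) \<le> Min (g ` (S::'v set))"
  for f g :: "'v \<Rightarrow> ereal"
  by (subst Min_ge_iff) (auto intro: order_trans[OF Min_le])

lemma T_mono: "mono T"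
proof (rule monoI, rule le_funI)
  fix f g :: "'v \<Rightarrow> ereal" and v assume fg: "f \<le> g"
  have tm: "ereal (real_of_int (w v u)) + ereal lam * f u \<le> ereal (real_of_int (w v u)) + ereal lam * g u" for u
    using fg lam0 by (intro add_left_mono ereal_mult_left_mono) (auto simp: le_fun_def)
  show "T f v \<le> T g v"
  proof (cases "v \<in> V")
    case True
    have "Max ((\<lambda>u. ereal (real_of_int (w v u)) + ereal lam * f u) ` succs v) \<le> Max ((\<lambda>u. ereal (real_of_int (w v u)) + ereal lam * g u) ` succs v)"
      by (rule Max_pw[OF succs_fin succs_ne[OF True] tm])
    moreover have "Min ((\<lambda>u. ereal (real_of_int (w v u)) + ereal lam * f u) ` succs v) \<le> Min ((\<lambda>u. ereal (real_of_int (w v u)) + ereal lam * g u) ` succs v)"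
      by (rule Min_pw[OF succs_fin succs_ne[OF True] tm])
    ultimately show ?thesis unfolding T_def by (auto simp: le_max_iff_disj)
  qed (simp add: T_def)
qed

lemma bellman_exists:
  "\<exists>val. (\<forall>v\<in>V. \<bar>val v\<bar> \<le> C) \<and>
     (\<forall>v\<in>V. \<exists>u. (v,u) \<in> E \<and> val v = real_of_int (w v u) + lam * val u) \<and>
     (\<forall>v\<in>V. \<forall>u. v \<in> VE \<longrightarrow> (v,u) \<in> E \<longrightarrow> real_of_int (w v u) + lam * val u \<le> val v) \<and>
     (\<forall>v\<in>V. \<forall>u. v \<notin> VE \<longrightarrow> (v,u) \<in> E \<longrightarrow> val v \<le> real_of_int (w v u) + lam * val u)"
proof -
  define g where "g = lfp T"
  have hfix: "g = T g" unfolding g_def using lfp_unfold[OF T_mono] .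
  have up: "T (\<lambda>_. ereal C) \<le> (\<lambda>_. ereal C)"
  proof (rule le_funI)
    fix v
    have tb: "ereal (real_of_int (w v u)) + ereal lam * ereal C \<le> ereal C" if "u \<in> succs v" for u
      using w_bound[of v u] that C_eq unfolding succs_def by auto
    show "T (\<lambda>_. ereal C) v \<le> ereal C"
    proof (cases "v \<in> V")
      case True
      then obtain u0 where u0: "u0 \<in> succs v" using succs_ne by blast
      have "Max ((\<lambda>u. ereal (real_of_int (w v u)) + ereal lam * ereal C) ` succs v) \<le> ereal C"
        using tb succs_fin succs_ne[OF True] by (subst Max_le_iff) auto
      moreover have "Min ((\<lambda>u. ereal (real_of_int (w v u)) + ereal lam * ereal C) ` succs v) \<le> ereal C"
        using tb[OF u0] succs_fin u0 by (meson Min_le finite_imageI image_eqI order_trans)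
      ultimately show ?thesis unfolding T_def using C_nonneg by auto
    qed (auto simp: T_def C_nonneg)
  qed
  have gup: "g v \<le> ereal C" for v
    using lfp_lowerbound[of T, OF up] unfolding g_def le_fun_def by blast
  have glow: "v \<in> V \<Longrightarrow> - ereal C \<le> g v" for v
    by (subst hfix) (simp add: T_def)
  define val where "val v = real_of_ereal (g v)" for v
  have gval: "v \<in> V \<Longrightarrow> g v = ereal (val v)" for v
    unfolding val_def using gup[of v] glow[of v] C_nonneg
    by (cases "g v") auto
  have valb: "\<forall>v\<in>V. \<bar>val v\<bar> \<le> C"
    using gup glow gval by (metis abs_le_iff ereal_less_eq(3) ereal_uminus_le_reorder uminus_ereal.simps(1))
  define F where "F v u = real_of_int (w v u) + lam * val u" for v u
  have img: "v \<in> V \<Longrightarrow> (\<lambda>u. ereal (real_of_int (w v u)) + ereal lam * g u) ` succs v = (\<lambda>u. ereal (F v u)) ` succs v" for v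
    by (rule image_cong) (auto simp: gval succs_V F_def)
  have Flow: "u \<in> succs v \<Longrightarrow> - C \<le> F v u" for u v
  proof -
    assume u: "u \<in> succs v"
    have "- B0 \<le> real_of_int (w v u)" using w_bound[of v u] u unfolding succs_def by auto
    moreover have "lam * (- C) \<le> lam * val u" using valb succs_V[OF u] lam0
      by (intro mult_left_mono) auto
    ultimately show ?thesis using C_eq unfolding F_def by (simp add: algebra_simps)
  qed
  have main: "v \<in> V \<Longrightarrow> (\<exists>u\<in>succs v. val v = F v u) \<and>
       (v \<in> VE \<longrightarrow> (\<forall>u\<in>succs v. F v u \<le> val v)) \<and> (v \<notin> VE \<longrightarrow> (\<forall>u\<in>succs v. val v \<le> F v u))" for v
  proof -
    assume vV: "v \<in> V"
    let ?A = "(\<lambda>u. ereal (F v u)) ` succs v"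
    have fa: "finite ?A" "?A \<noteq> {}" using succs_fin succs_ne[OF vV] by auto
    have gv: "g v = max (- ereal C) (if v \<in> VE then Max ?A else Min ?A)"
      by (subst hfix) (simp add: T_def vV img[OF vV])
    show ?thesis
    proof (cases "v \<in> VE")
      case True
      obtain u0 where u0: "u0 \<in> succs v" "Max ?A = ereal (F v u0)" using Max_in[OF fa] by auto
      have "- ereal C \<le> Max ?A" using u0 Flow[OF u0(1)] by simp
      then have "g v = Max ?A" using gv True by (simp add: max_def)
      then have e: "ereal (val v) = Max ?A" using gval vV by simp
      have "val v = F v u0" using e u0 by simp
      moreover have "\<forall>u\<in>succs v. F v u \<le> val v"
        using e Max_ge[OF fa(1)] by (metis ereal_less_eq(3) image_eqI)
      ultimately show ?thesis using True u0 by auto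
    next
      case False
      obtain u0 where u0: "u0 \<in> succs v" "Min ?A = ereal (F v u0)" using Min_in[OF fa] by auto
      have "- ereal C \<le> Min ?A" using u0 Flow[OF u0(1)] by simp
      then have "g v = Min ?A" using gv False by (simp add: max_def)
      then have e: "ereal (val v) = Min ?A" using gval vV by simp
      have "val v = F v u0" using e u0 by simp
      moreover have "\<forall>u\<in>succs v. val v \<le> F v u"
        using e Min_le[OF fa(1)] by (metis ereal_less_eq(3) image_eqI)
      ultimately show ?thesis using False u0 by auto
    qed
  qed
  show ?thesis
    apply (rule exI[of _ val])
    using valb main unfolding F_def succs_def by auto
qed

end


context dg begin

lemma guarantee:
  assumes vb: "\<forall>v\<in>V. \<bar>val v\<bar> \<le> C"
    and adam: "\<forall>v\<in>V. \<forall>u. v \<notin> VE \<longrightarrow> (v,u) \<in> E \<longrightarrow> val v \<le> real_of_int (w v u) + lam * val u"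
    and p: "path E p"
    and mv: "\<forall>i. p i \<in> VE \<longrightarrow> val (p i) = real_of_int (w (p i) (p (Suc i))) + lam * val (p (Suc i))"
  shows "val (p 0) \<le> disc_sum lam w p"
proof (rule telescope[OF p vb], rule allI)
  fix i
  show "val (p i) \<le> real_of_int (w (p i) (p (Suc i))) + lam * val (p (Suc i))"
    using mv adam path_V[OF p, of i] p unfolding path_def by (cases "p i \<in> VE") auto
qed

lemma counter:
  assumes vb: "\<forall>v\<in>V. \<bar>val v\<bar> \<le> C"
    and eve: "\<forall>v\<in>V. \<forall>u. v \<in> VE \<longrightarrow> (v,u) \<in> E \<longrightarrow> real_of_int (w v u) + lam * val u \<le> val v"
    and p: "path E p"
    and mv: "\<forall>i. p i \<notin> VE \<longrightarrow> val (p i) = real_of_int (w (p i) (p (Suc i))) + lam * val (p (Suc i))"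
  shows "disc_sum lam w p \<le> val (p 0)"
proof -
  interpret n: dg V VE E "\<lambda>u v. - w u v" lam using dg_axioms unfolding dg_def .
  have vb': "\<forall>v\<in>V. \<bar>- val v\<bar> \<le> C" using vb by simp
  have "- val (p 0) \<le> disc_sum lam (\<lambda>u v. - w u v) p"
  proof (rule n.telescope[OF p vb'], rule allI)
    fix i
    show "- val (p i) \<le> real_of_int (- w (p i) (p (Suc i))) + lam * - val (p (Suc i))"
      using mv eve path_V[OF p, of i] p unfolding path_def by (cases "p i \<in> VE") force+
  qed
  then show ?thesis using disc_sum_neg[OF p] by simp
qed

end

definition extL :: "('v list \<Rightarrow> 'v) \<Rightarrow> 'v list \<Rightarrow> nat \<Rightarrow> 'v list" where
  "extL nx g n = ((\<lambda>h. h @ [nx h]) ^^ n) g"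

definition extP :: "('v list \<Rightarrow> 'v) \<Rightarrow> 'v list \<Rightarrow> nat \<Rightarrow> 'v" where
  "extP nx g i = extL nx g i ! i"

lemma extL_0[simp]: "extL nx g 0 = g" by (simp add: extL_def)
lemma extL_Suc: "extL nx g (Suc n) = extL nx g n @ [nx (extL nx g n)]" by (simp add: extL_def)
lemma extL_len[simp]: "length (extL nx g n) = length g + n" by (induct n) (auto simp: extL_Suc)

lemma extL_prefix: "\<exists>ys. extL nx g (n + k) = extL nx g n @ ys"
  by (induct k) (auto simp: extL_Suc)

lemma extL_nth: "j < length g + n \<Longrightarrow> n \<le> m \<Longrightarrow> extL nx g m ! j = extL nx g n ! j"
  using extL_prefix[of nx g n "m - n"] by (auto simp: nth_append)

lemma extL_take: "n \<le> m \<Longrightarrow> take (length g + n) (extL nx g m) = extL nx g n"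
  using extL_prefix[of nx g n "m - n"] by auto

lemma extP_init: "i < length g \<Longrightarrow> extP nx g i = g ! i"
  unfolding extP_def using extL_nth[of i g 0 i nx] by simp

lemma extP_prefix: assumes "g \<noteq> []" shows "play_prefix (extP nx g) i = take (Suc i) (extL nx g i)"
proof (rule nth_equalityI)
  show "length (play_prefix (extP nx g) i) = length (take (Suc i) (extL nx g i))"
    using assms by (cases g) (auto simp: play_prefix_def)
next
  fix j assume "j < length (play_prefix (extP nx g) i)"
  then have j: "j \<le> i" by (simp add: play_prefix_def)
  have "extP nx g j = extL nx g i ! j" unfolding extP_def
    using extL_nth[of j g j i nx] j assms by (cases g) auto
  then show "play_prefix (extP nx g) i ! j = take (Suc i) (extL nx g i) ! j"
    using j by (simp add: play_prefix_def nth_append del: upt_Suc)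
qed

lemma extP_step: assumes "g \<noteq> []" "length g \<le> Suc i"
  shows "extP nx g (Suc i) = nx (play_prefix (extP nx g) i)"
proof -
  define k where "k = Suc i - length g"
  have k: "length g + k = Suc i" "k \<le> i" using assms unfolding k_def by (cases g; auto)+
  have "extP nx g (Suc i) = extL nx g (Suc k) ! Suc i"
    unfolding extP_def using extL_nth[of "Suc i" g "Suc k" "Suc i" nx] k by simp
  also have "\<dots> = nx (extL nx g k)" using k by (simp add: extL_Suc nth_append)
  also have "extL nx g k = take (Suc i) (extL nx g i)" using extL_take[of k i g nx] k by simp
  finally show ?thesis using extP_prefix[OF assms(1)] by simp
qed



lemma pp_last[simp]: "last (play_prefix p i) = p i" by (simp add: play_prefix_def)
lemma pp_len[simp]: "length (play_prefix p i) = Suc i" by (simp add: play_prefix_def)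
lemma pp_nth: "j \<le> i \<Longrightarrow> play_prefix p i ! j = p j"
  by (simp add: play_prefix_def nth_append del: upt_Suc)

lemma pp_eq: "(\<forall>j\<le>i. p j = q j) \<Longrightarrow> play_prefix p i = play_prefix q i"
  unfolding play_prefix_def by (auto simp del: upt_Suc)

lemma pp_take: "K \<le> i \<Longrightarrow> take (Suc K) (play_prefix p i) = play_prefix p K"
  unfolding play_prefix_def by (simp add: take_map del: upt_Suc)

lemma pp_is_prefix: "p 0 = q0 \<Longrightarrow> (\<forall>j<i. (p j, p (Suc j)) \<in> E) \<Longrightarrow> is_prefix E q0 (play_prefix p i)"
proof -
  assume a: "p 0 = q0" "\<forall>j<i. (p j, p (Suc j)) \<in> E"
  have ne: "play_prefix p i \<noteq> []" using pp_len[of p i] by (metis Zero_not_Suc list.size(3))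
  have "hd (play_prefix p i) = p 0" using ne by (simp add: hd_conv_nth pp_nth)
  then show ?thesis unfolding is_prefix_def using ne a by (auto simp: pp_nth)
qed

lemma extend_play:
  assumes sig: "eve_strategy VE E q0 \<sigma>" and ch: "\<forall>v\<in>V. (v, ch v) \<in> E" and EV: "E \<subseteq> V \<times> V"
    and q0: "q0 \<in> V" and pl: "is_play E q0 p"
    and pc: "\<forall>i<K. p i \<in> VE \<longrightarrow> p (Suc i) = \<sigma> (play_prefix p i)"
  shows "\<exists>q. consistent VE E q0 \<sigma> q \<and> (\<forall>i\<le>K. q i = p i) \<and> (\<forall>i\<ge>K. q i \<notin> VE \<longrightarrow> q (Suc i) = ch (q i))"
proof -
  define nx where "nx h = (if last h \<in> VE then \<sigma> h else ch (last h))" for h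
  define g where "g = play_prefix p K"
  define q where "q = extP nx g"
  have gne: "g \<noteq> []" and glen: "length g = Suc K" unfolding g_def play_prefix_def by auto
  have qinit: "i \<le> K \<Longrightarrow> q i = p i" for i
    unfolding q_def using extP_init[of i g nx] glen by (simp add: g_def pp_nth)
  have qstep: "K \<le> i \<Longrightarrow> q (Suc i) = nx (play_prefix q i)" for i
    unfolding q_def using extP_step[OF gne, of i nx] glen by simp
  have q00: "q 0 = q0" using qinit[of 0] pl unfolding is_play_def by simp
  have edges: "(q i, q (Suc i)) \<in> E" for i
  proof (induction i rule: less_induct)
    case (less i)
    show ?case
    proof (cases "i < K")
      case True then show ?thesis using qinit[of i] qinit[of "Suc i"] pl unfolding is_play_def by simp
    next
      case False
      have qiV: "q i \<in> V"
      proof (cases i)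
        case 0 then show ?thesis using q00 q0 by simp
      next
        case (Suc j) then show ?thesis using less[of j] EV by auto
      qed
      show ?thesis
      proof (cases "q i \<in> VE")
        case True
        have "is_prefix E q0 (play_prefix q i)" using pp_is_prefix[of q q0 i E, OF q00] less by blast
        then show ?thesis using sig True qstep[of i] False unfolding eve_strategy_def nx_def by auto
      next
        case F: False
        then show ?thesis using qstep[of i] False ch qiV unfolding nx_def by auto
      qed
    qed
  qed
  have cons: "consistent VE E q0 \<sigma> q"
    unfolding consistent_def is_play_def
  proof (intro conjI allI impI)
    show "q 0 = q0" by (rule q00)
    fix i show "(q i, q (Suc i)) \<in> E" by (rule edges)
  next
    fix i assume qi: "q i \<in> VE"
    show "q (Suc i) = \<sigma> (play_prefix q i)"
    proof (cases "i < K")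
      case True
      have "play_prefix q i = play_prefix p i" using qinit True by (intro pp_eq) auto
      then show ?thesis using pc True qi qinit[of i] qinit[of "Suc i"] by simp
    next
      case False then show ?thesis using qstep[of i] qi unfolding nx_def by simp
    qed
  qed
  show ?thesis using cons qinit qstep unfolding nx_def by (intro exI[of _ q]) auto
qed



theorem mainTheorem9:
  fixes V VE :: "'v set" and E :: "('v \<times> 'v) set" and w :: "'v \<Rightarrow> 'v \<Rightarrow> int"
    and q0 :: 'v and I :: "real set" and lam :: real
  assumes "game_graph V VE E q0"
    and "is_interval I" and "\<exists>x\<in>I. \<exists>y\<in>I. x \<noteq> y"
    and "0 < lam" and "lam < 1"
    and "\<exists>\<sigma>. eve_strategy VE E q0 \<sigma> \<and>
           (\<forall>p. consistent VE E q0 \<sigma> p \<longrightarrow> disc_sum lam w p \<in> I)"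
  shows "\<exists>\<sigma>. eve_strategy VE E q0 \<sigma> \<and> finite_memory VE E q0 \<sigma> \<and>
           (\<forall>p. consistent VE E q0 \<sigma> p \<longrightarrow> disc_sum lam w p \<in> I)"
proof -
  have finV: "finite V" and EV: "E \<subseteq> V \<times> V" and VEV: "VE \<subseteq> V" and q0V: "q0 \<in> V"
    and suc: "\<forall>v\<in>V. \<exists>u. (v,u) \<in> E" using assms(1) unfolding game_graph_def by auto
  interpret m: dg V VE E w lam using finV EV suc assms(4,5) by unfold_locales auto
  interpret n: dg V VE E "\<lambda>u v. - w u v" lam using finV EV suc assms(4,5) by unfold_locales auto
  have Iint: "\<And>x y z. x \<in> I \<Longrightarrow> z \<in> I \<Longrightarrow> x \<le> y \<Longrightarrow> y \<le> z \<Longrightarrow> y \<in> I"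
    using assms(2) unfolding is_interval_1 by blast
  obtain \<sigma> where sig: "eve_strategy VE E q0 \<sigma>" and sigwin: "\<forall>p. consistent VE E q0 \<sigma> p \<longrightarrow> disc_sum lam w p \<in> I"
    using assms(6) by blast
  obtain a b where ab: "a \<in> I" "b \<in> I" "a < b"
    using assms(3) by (metis linorder_neqE_linordered_idom)
  define C where "C = m.C"
  have C0: "0 \<le> C" unfolding C_def by (rule m.C_nonneg)
  obtain K where K: "lam ^ K < (b - a) / (2 * C + 1)"
    using real_arch_pow_inv[of "(b - a) / (2 * C + 1)" lam] ab C0 assms(5) by auto
  have lamK: "0 < lam ^ K" using assms(4) by simp
  have Kd: "2 * C * lam ^ K < b - a"
  proof -
    have "lam ^ K * (2 * C + 1) < b - a" using K C0 by (simp add: pos_less_divide_eq)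
    then show ?thesis using lamK by (simp add: algebra_simps)
  qed
  obtain val where valall: "(\<forall>v\<in>V. \<bar>val v\<bar> \<le> m.C) \<and> (\<forall>v\<in>V. \<exists>u. (v,u) \<in> E \<and> val v = real_of_int (w v u) + lam * val u) \<and> (\<forall>v\<in>V. \<forall>u. v \<in> VE \<longrightarrow> (v,u) \<in> E \<longrightarrow> real_of_int (w v u) + lam * val u \<le> val v) \<and> (\<forall>v\<in>V. \<forall>u. v \<notin> VE \<longrightarrow> (v,u) \<in> E \<longrightarrow> val v \<le> real_of_int (w v u) + lam * val u)"
    using m.bellman_exists by (rule exE)
  have vb: "\<forall>v\<in>V. \<bar>val v\<bar> \<le> m.C" using valall by blast
  have vex: "\<forall>v\<in>V. \<exists>u. (v,u) \<in> E \<and> val v = real_of_int (w v u) + lam * val u" using valall by blast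
  have veve: "\<forall>v\<in>V. \<forall>u. v \<in> VE \<longrightarrow> (v,u) \<in> E \<longrightarrow> real_of_int (w v u) + lam * val u \<le> val v" using valall by blast
  have vadam: "\<forall>v\<in>V. \<forall>u. v \<notin> VE \<longrightarrow> (v,u) \<in> E \<longrightarrow> val v \<le> real_of_int (w v u) + lam * val u" using valall by blast
  obtain valN where valNall: "(\<forall>v\<in>V. \<bar>valN v\<bar> \<le> n.C) \<and> (\<forall>v\<in>V. \<exists>u. (v,u) \<in> E \<and> valN v = real_of_int (- w v u) + lam * valN u) \<and> (\<forall>v\<in>V. \<forall>u. v \<in> VE \<longrightarrow> (v,u) \<in> E \<longrightarrow> real_of_int (- w v u) + lam * valN u \<le> valN v) \<and> (\<forall>v\<in>V. \<forall>u. v \<notin> VE \<longrightarrow> (v,u) \<in> E \<longrightarrow> valN v \<le> real_of_int (- w v u) + lam * valN u)"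
    using n.bellman_exists by (rule exE)
  have nb: "\<forall>v\<in>V. \<bar>valN v\<bar> \<le> n.C" using valNall by blast
  have nex: "\<forall>v\<in>V. \<exists>u. (v,u) \<in> E \<and> valN v = real_of_int (- w v u) + lam * valN u" using valNall by blast
  have neve: "\<forall>v\<in>V. \<forall>u. v \<in> VE \<longrightarrow> (v,u) \<in> E \<longrightarrow> real_of_int (- w v u) + lam * valN u \<le> valN v" using valNall by blast
  have nadam: "\<forall>v\<in>V. \<forall>u. v \<notin> VE \<longrightarrow> (v,u) \<in> E \<longrightarrow> valN v \<le> real_of_int (- w v u) + lam * valN u" using valNall by blast
  define chM where "chM v = (SOME u. (v,u) \<in> E \<and> val v = real_of_int (w v u) + lam * val u)" for v
  define chN where "chN v = (SOME u. (v,u) \<in> E \<and> valN v = real_of_int (- w v u) + lam * valN u)" for v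
  have chM: "v \<in> V \<Longrightarrow> (v, chM v) \<in> E \<and> val v = real_of_int (w v (chM v)) + lam * val (chM v)" for v
  proof -
    assume "v \<in> V"
    then have "\<exists>u. (v,u) \<in> E \<and> val v = real_of_int (w v u) + lam * val u" using vex by blast
    then show ?thesis unfolding chM_def by (rule someI_ex)
  qed
  have chN: "v \<in> V \<Longrightarrow> (v, chN v) \<in> E \<and> valN v = real_of_int (- w v (chN v)) + lam * valN (chN v)" for v
  proof -
    assume "v \<in> V"
    then have "\<exists>u. (v,u) \<in> E \<and> valN v = real_of_int (- w v u) + lam * valN u" using nex by blast
    then show ?thesis unfolding chN_def by (rule someI_ex)
  qed
  define sP where "sP g = (\<Sum>i<K. lam ^ i * real_of_int (w (g ! i) (g ! Suc i)))" for g :: "'v list"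
  define okM where "okM g = (\<forall>y. sP g + lam ^ K * val (g ! K) \<le> y \<and> y \<le> sP g + lam ^ K * C \<longrightarrow> y \<in> I)" for g
  define outL where "outL h = (if length h \<le> K then \<sigma> h else if okM (take (Suc K) h) then chM (last h) else chN (last h))" for h
  have strat: "eve_strategy VE E q0 outL"
    unfolding eve_strategy_def
  proof (intro allI impI)
    fix h assume h: "is_prefix E q0 h \<and> last h \<in> VE"
    show "(last h, outL h) \<in> E"
    proof (cases "length h \<le> K")
      case True then show ?thesis using sig h unfolding eve_strategy_def outL_def by auto
    next
      case False then show ?thesis using chM chN h VEV unfolding outL_def by auto
    qed
  qed
  have fm: "finite_memory VE E q0 outL"
  proof -
    define S where "S = {xs. set xs \<subseteq> V \<and> length xs \<le> Suc (Suc K)}"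
    have finS: "finite S" unfolding S_def using finite_lists_length_le[OF finV] .
    obtain hb where hb: "bij_betw hb {0..<card S} S" using ex_bij_betw_nat_finite[OF finS] by blast
    define enc where "enc = inv_into {0..<card S} hb"
    have dec_enc: "st \<in> S \<Longrightarrow> hb (enc st) = st" for st
      unfolding enc_def using hb by (simp add: bij_betw_inv_into_right)
    have enc_in: "st \<in> S \<Longrightarrow> enc st \<in> {0..<card S}" for st
      unfolding enc_def using hb by (metis bij_betw_def inv_into_into)
    have hb_in: "m \<in> {0..<card S} \<Longrightarrow> hb m \<in> S" for m using hb by (metis bij_betwE)
    define updL where "updL st v = take (Suc K) st @ [if v \<in> V then v else q0]" for st v
    have updS: "st \<in> S \<Longrightarrow> updL st v \<in> S" for st v
      unfolding S_def updL_def using q0V by (auto dest: in_set_takeD)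
    define stL where "stL h = (if length h \<le> Suc K then h else take (Suc K) h @ [last h])" for h :: "'v list"
    have stLS: "set h \<subseteq> V \<Longrightarrow> stL h \<in> S" for h
    proof -
      assume hV: "set h \<subseteq> V"
      show "stL h \<in> S"
      proof (cases "length h \<le> Suc K")
        case True then show ?thesis using hV unfolding S_def stL_def by simp
      next
        case False
        then have "h \<noteq> []" by (metis list.size(3) zero_le)
        then have "last h \<in> set h" by (rule last_in_set)
        then have "last h \<in> V" using hV by (rule rev_subsetD)
        moreover have "set (take (Suc K) h) \<subseteq> V" using set_take_subset hV by (rule order_trans)
        ultimately show ?thesis using False unfolding S_def stL_def by simp
      qed
    qed
    have stL_snoc: "x \<in> V \<Longrightarrow> stL (xs @ [x]) = updL (stL xs) x" for xs x
    proof -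
      assume xV: "x \<in> V"
      show ?thesis
      proof (cases "length xs \<le> Suc K")
        case True then show ?thesis using xV unfolding stL_def updL_def by simp
      next
        case False then show ?thesis using xV unfolding stL_def updL_def by simp
      qed
    qed
    define upd where "upd m v = enc (updL (hb m) v)" for m v
    define m0 where "m0 = enc []"
    have fold: "set h \<subseteq> V \<Longrightarrow> foldl upd m0 h = enc (stL h)" for h
    proof (induction h rule: rev_induct)
      case Nil then show ?case by (simp add: m0_def stL_def)
    next
      case (snoc x xs)
      have pr: "set xs \<subseteq> V" "x \<in> V" using snoc.prems by auto
      have "foldl upd m0 (xs @ [x]) = upd (foldl upd m0 xs) x" by simp
      also have "\<dots> = upd (enc (stL xs)) x" using snoc.IH pr by simp
      also have "\<dots> = enc (updL (stL xs) x)" unfolding upd_def using dec_enc[OF stLS[OF pr(1)]] by simp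
      also have "\<dots> = enc (stL (xs @ [x]))" using stL_snoc[OF pr(2)] by simp
      finally show ?case .
    qed
    have outst: "h \<noteq> [] \<Longrightarrow> outL (stL h) = outL h" for h
      unfolding outL_def stL_def by auto
    show ?thesis unfolding finite_memory_def
    proof (intro exI[of _ "{0..<card S}"] exI[of _ m0] exI[of _ upd] exI[of _ "\<lambda>m. outL (hb m)"] conjI allI impI ballI)
      show "finite {0..<card S}" by simp
      show "m0 \<in> {0..<card S}" unfolding m0_def using enc_in S_def by auto
      fix m v assume "m \<in> {0..<card S}" then show "upd m v \<in> {0..<card S}"
        unfolding upd_def using hb_in updS enc_in by blast
    next
      fix h assume h: "is_prefix E q0 h \<and> last h \<in> VE"
      have hV: "set h \<subseteq> V"
      proof
        fix x assume "x \<in> set h"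
        then obtain j where j: "j < length h" "h ! j = x" by (metis in_set_conv_nth)
        show "x \<in> V"
        proof (cases j)
          case 0 then show ?thesis using h j q0V unfolding is_prefix_def by (metis hd_conv_nth)
        next
          case (Suc i) then show ?thesis using h j EV unfolding is_prefix_def by auto
        qed
      qed
      have "h \<noteq> []" using h unfolding is_prefix_def by simp
      then show "outL h = outL (hb (foldl upd m0 h))" using fold[OF hV] dec_enc stLS[OF hV] outst by simp
    qed
  qed
  have win: "disc_sum lam w p \<in> I" if pc: "consistent VE E q0 outL p" for p
  proof -
    have pl: "is_play E q0 p" using pc unfolding consistent_def by simp
    have pth: "path E p" using pl unfolding is_play_def path_def by simp
    have pcK: "\<forall>i<K. p i \<in> VE \<longrightarrow> p (Suc i) = \<sigma> (play_prefix p i)"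
      using pc unfolding consistent_def outL_def by auto
    define g where "g = play_prefix p K"
    have pafter: "K \<le> i \<Longrightarrow> p i \<in> VE \<Longrightarrow> p (Suc i) = (if okM g then chM (p i) else chN (p i))" for i
      using pc unfolding consistent_def outL_def g_def by (auto simp: pp_take)
    define S where "S = (\<Sum>i<K. lam ^ i * real_of_int (w (p i) (p (Suc i))))"
    have sPg: "sP g = S" unfolding sP_def S_def g_def by (intro sum.cong) (auto simp: pp_nth)
    have gK: "g ! K = p K" unfolding g_def by (simp add: pp_nth)
    have Sq: "(\<Sum>i<K. lam ^ i * real_of_int (w (q i) (q (Suc i)))) = S" if "\<forall>i\<le>K. q i = p i" for q
      unfolding S_def using that by (intro sum.cong) auto
    define t where "t = disc_sum lam w (\<lambda>j. p (j + K))"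
    have ds: "disc_sum lam w p = S + lam ^ K * t" unfolding S_def t_def using m.ds_split[OF pth] .
    have tb: "\<bar>t\<bar> \<le> C" unfolding t_def C_def using m.ds_bound[OF path_tail[OF pth]] .
    obtain q1 where q1: "consistent VE E q0 \<sigma> q1" "\<forall>i\<le>K. q1 i = p i" "\<forall>i\<ge>K. q1 i \<notin> VE \<longrightarrow> q1 (Suc i) = chM (q1 i)"
      using extend_play[OF sig _ EV q0V pl pcK, of chM] chM by blast
    have q1p: "path E q1" using q1(1) unfolding consistent_def is_play_def path_def by simp
    have x1I: "S + lam ^ K * disc_sum lam w (\<lambda>j. q1 (j + K)) \<in> I"
    proof -
      have "disc_sum lam w q1 = S + lam ^ K * disc_sum lam w (\<lambda>j. q1 (j + K))"
        using m.ds_split[OF q1p, of K] Sq[OF q1(2)] by simp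
      moreover have "disc_sum lam w q1 \<in> I" using sigwin q1(1) by blast
      ultimately show ?thesis by simp
    qed
    have t1: "disc_sum lam w (\<lambda>j. q1 (j + K)) \<le> val (p K)"
    proof -
      have "disc_sum lam w (\<lambda>j. q1 (j + K)) \<le> val ((\<lambda>j. q1 (j + K)) 0)"
        apply (rule m.counter[OF vb veve path_tail[OF q1p]])
        using q1(3) chM m.path_V[OF q1p] by auto
      then show ?thesis using q1(2) by simp
    qed
    obtain q2 where q2: "consistent VE E q0 \<sigma> q2" "\<forall>i\<le>K. q2 i = p i" "\<forall>i\<ge>K. q2 i \<notin> VE \<longrightarrow> q2 (Suc i) = chN (q2 i)"
      using extend_play[OF sig _ EV q0V pl pcK, of chN] chN by blast
    have q2p: "path E q2" using q2(1) unfolding consistent_def is_play_def path_def by simp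
    have x2I: "S + lam ^ K * disc_sum lam w (\<lambda>j. q2 (j + K)) \<in> I"
    proof -
      have "disc_sum lam w q2 = S + lam ^ K * disc_sum lam w (\<lambda>j. q2 (j + K))"
        using m.ds_split[OF q2p, of K] Sq[OF q2(2)] by simp
      moreover have "disc_sum lam w q2 \<in> I" using sigwin q2(1) by blast
      ultimately show ?thesis by simp
    qed
    have t2: "- valN (p K) \<le> disc_sum lam w (\<lambda>j. q2 (j + K))"
    proof -
      have "disc_sum lam (\<lambda>u v. - w u v) (\<lambda>j. q2 (j + K)) \<le> valN ((\<lambda>j. q2 (j + K)) 0)"
        apply (rule n.counter[OF nb neve path_tail[OF q2p]])
        using q2(3) chN m.path_V[OF q2p] by auto
      then show ?thesis using q2(2) m.disc_sum_neg[OF path_tail[OF q2p]] by simp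
    qed
    show ?thesis
    proof (cases "okM g")
      case True
      have "val ((\<lambda>j. p (j + K)) 0) \<le> t"
        unfolding t_def
        apply (rule m.guarantee[OF vb vadam path_tail[OF pth]])
        using pafter True chM m.path_V[OF pth] by auto
      then have "lam ^ K * val (p K) \<le> lam ^ K * t" using lamK by simp
      moreover have "lam ^ K * t \<le> lam ^ K * C" using tb lamK by simp
      ultimately show ?thesis using True ds unfolding okM_def sPg gK by auto
    next
      case False
      then obtain y1 where y1: "S + lam ^ K * val (p K) \<le> y1" "y1 \<le> S + lam ^ K * C" "y1 \<notin> I"
        unfolding okM_def sPg gK by auto
      have "valN ((\<lambda>j. p (j + K)) 0) \<le> disc_sum lam (\<lambda>u v. - w u v) (\<lambda>j. p (j + K))"
        apply (rule n.guarantee[OF nb nadam path_tail[OF pth]])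
        using pafter False chN m.path_V[OF pth] by auto
      then have tN: "t \<le> - valN (p K)" unfolding t_def using m.disc_sum_neg[OF path_tail[OF pth]] by simp
      show ?thesis
      proof (rule ccontr)
        assume yn: "disc_sum lam w p \<notin> I"
        have "lam ^ K * disc_sum lam w (\<lambda>j. q1 (j + K)) \<le> lam ^ K * val (p K)" using t1 lamK by simp
        then have "S + lam ^ K * disc_sum lam w (\<lambda>j. q1 (j + K)) \<le> y1" using y1(1) by linarith
        then have "b < y1" using Iint[OF x1I ab(2), of y1] y1(3) by (cases "y1 \<le> b") auto
        have "lam ^ K * t \<le> lam ^ K * disc_sum lam w (\<lambda>j. q2 (j + K))" using tN t2 lamK by simp
        then have "disc_sum lam w p \<le> S + lam ^ K * disc_sum lam w (\<lambda>j. q2 (j + K))" using ds by linarith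
        then have "disc_sum lam w p < a" using Iint[OF ab(1) x2I, of "disc_sum lam w p"] yn
          by (cases "a \<le> disc_sum lam w p") auto
        have "lam ^ K * (- C) \<le> lam ^ K * t" using tb lamK by (intro mult_left_mono) auto
        then show False using \<open>b < y1\<close> \<open>disc_sum lam w p < a\<close> y1(2) ds Kd by (simp add: algebra_simps)
      qed
    qed
  qed
  show ?thesis using strat fm win by blast
qed


end
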